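(* Let $K$ be a compact subset of $M$ and let $U$ be a relatively open subset of $M$ with $K\subset U$. Then there is a compact set $K'$ with $K\subset K'\subset U$ such that $K'$ satisfies the bi-Lipschitz cone condition.
   Context: $\Omega\subset\mathbb{R}^n$ is a bounded, connected open set which, near each boundary point, is equivalent to a half space via a bi-Lipschitz map; $M=\bar\Omega$. Bi-Lipschitz cone condition for compact $K\subset M$: there are $r,\varepsilon>0$ such that for each $x_0\in\partial K$ there is $F:B_r(x_0)\to\mathbb{R}^n$, $F(x_0)=0$, $\varepsilon|x-y|\le|F(x)-F(y)|\le\varepsilon^{-1}|x-y|$, with $F(K\cap B_r(x_0))\supset\{(x_1,x')\in\mathbb{R}\times\mathbb{R}^{n-1}:|x'|<\varepsilon x_1<\varepsilon^2\}$. *)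

theory Defs
  imports "HOL-Analysis.Analysis"
begin

definition e1 :: "'a::euclidean_space" where
  "e1 = (SOME b. b \<in> Basis)"

definition first_coord :: "'a::euclidean_space \<Rightarrow> real" where
  "first_coord x = x \<bullet> e1"

definition rest_coords :: "'a::euclidean_space \<Rightarrow> 'a" where
  "rest_coords x = x - (x \<bullet> e1) *\<^sub>R e1"

definition half_space :: "'a::euclidean_space set" where
  "half_space = {x. first_coord x > 0}"

definition bi_lipschitz_on :: "real \<Rightarrow> 'a::metric_space set \<Rightarrow> ('a \<Rightarrow> 'b::metric_space) \<Rightarrow> bool" where
  "bi_lipschitz_on L S F \<longleftrightarrow> L > 0 \<and>
     (\<forall>x\<in>S. \<forall>y\<in>S. dist x y \<le> L * dist (F x) (F y) \<and> dist (F x) (F y) \<le> L * dist x y)"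

definition bilip_domain :: "'a::euclidean_space set \<Rightarrow> bool" where
  "bilip_domain \<Omega> \<longleftrightarrow> bounded \<Omega> \<and> connected \<Omega> \<and> open \<Omega> \<and>
     (\<forall>p\<in>frontier \<Omega>. \<exists>V (\<Phi>::'a \<Rightarrow> 'a) L. open V \<and> p \<in> V \<and> bi_lipschitz_on L V \<Phi> \<and>
         open (\<Phi> ` V) \<and> \<Phi> ` (V \<inter> \<Omega>) = \<Phi> ` V \<inter> half_space)"

definition cone_set :: "real \<Rightarrow> 'a::euclidean_space set" where
  "cone_set \<epsilon> = {x. norm (rest_coords x) < \<epsilon> * first_coord x \<and> \<epsilon> * first_coord x < \<epsilon>\<^sup>2}"

text \<open>Bi-Lipschitz cone condition for K (boundary of K taken in R^n).\<close>
definition bilip_cone_condition :: "'a::euclidean_space set \<Rightarrow> bool" where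
  "bilip_cone_condition K \<longleftrightarrow> (\<exists>r>0. \<exists>\<epsilon>>0. \<forall>x0\<in>frontier K. \<exists>F::'a \<Rightarrow> 'a.
      F x0 = 0 \<and>
      (\<forall>x\<in>ball x0 r. \<forall>y\<in>ball x0 r.
          \<epsilon> * dist x y \<le> dist (F x) (F y) \<and> dist (F x) (F y) \<le> dist x y / \<epsilon>) \<and>
      cone_set \<epsilon> \<subseteq> F ` (K \<inter> ball x0 r))"

end

theory Submission imports Defs begin

lemma e1_Basis: "(e1::'a::euclidean_space) \<in> Basis"
  unfolding e1_def by (rule someI_ex) (use nonempty_Basis in blast)

lemma norm_e1[simp]: "norm (e1::'a::euclidean_space) = 1"
  by (rule norm_Basis[OF e1_Basis])

lemma inner_e1_e1[simp]: "(e1::'a::euclidean_space) \<bullet> e1 = 1"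
  by (metis norm_e1 norm_eq_1)

definition hh :: "'a::euclidean_space \<Rightarrow> 'a \<Rightarrow> 'a" where
  "hh n v = (if n = e1 then v else v - (2 * (v \<bullet> (n - e1)) / ((n - e1) \<bullet> (n - e1))) *\<^sub>R (n - e1))"

lemma hh_diff: "hh n (v - w) = hh n v - hh n w"
  by (simp add: hh_def inner_diff_left algebra_simps add_divide_distrib diff_divide_distrib)

lemma hh_scale: "hh n (t *\<^sub>R v) = t *\<^sub>R hh n v"
  by (simp add: hh_def algebra_simps)

lemma hh_norm: "norm (hh n v) = norm v"
proof (cases "n = e1")
  case True then show ?thesis by (simp add: hh_def)
next
  case False
  define a where "a = n - e1"
  have a0: "a \<bullet> a > 0" using False by (simp add: a_def)
  define t where "t = 2 * (v \<bullet> a) / (a \<bullet> a)"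
  have h: "hh n v = v - t *\<^sub>R a" using False by (simp add: hh_def a_def t_def)
  have "(norm (v - t *\<^sub>R a))\<^sup>2 = v \<bullet> v - 2 * t * (v \<bullet> a) + t^2 * (a \<bullet> a)"
    unfolding power2_norm_eq_inner
    by (simp add: inner_diff_left inner_diff_right inner_commute power2_eq_square algebra_simps)
  also have "\<dots> = v \<bullet> v" using a0 by (simp add: t_def power2_eq_square field_simps)
  finally have "(norm (hh n v))\<^sup>2 = (norm v)\<^sup>2" by (simp add: h power2_norm_eq_inner)
  then show ?thesis by (simp add: power2_eq_iff_nonneg)
qed

lemma hh_invol: "hh n (hh n v) = v"
proof (cases "n = e1")
  case True then show ?thesis by (simp add: hh_def)
next
  case False
  define a where "a = n - e1"
  have a0: "a \<bullet> a > 0" using False by (simp add: a_def)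
  define t where "t = 2 * (v \<bullet> a) / (a \<bullet> a)"
  have h1: "hh n v = v - t *\<^sub>R a" using False by (simp add: hh_def a_def t_def)
  have "hh n (v - t *\<^sub>R a) = (v - t *\<^sub>R a) - (2 * ((v - t *\<^sub>R a) \<bullet> a) / (a \<bullet> a)) *\<^sub>R a"
    using False by (simp add: hh_def a_def)
  also have "2 * ((v - t *\<^sub>R a) \<bullet> a) / (a \<bullet> a) = - t"
    using a0 by (simp add: t_def inner_diff_left field_simps)
  finally show ?thesis using h1 by simp
qed

lemma hh_n:
  assumes "norm n = 1"
  shows "hh n n = e1"
proof (cases "n = e1")
  case True then show ?thesis by (simp add: hh_def)
next
  case False
  define a where "a = n - e1"
  have a0: "a \<bullet> a > 0" using False by (simp add: a_def)
  have nn: "n \<bullet> n = 1" using assms by (simp add: norm_eq_1)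
  have "a \<bullet> a = 2 - 2 * (n \<bullet> e1)" by (simp add: a_def inner_diff_left inner_diff_right nn inner_commute)
  moreover have "n \<bullet> a = 1 - n \<bullet> e1" by (simp add: a_def inner_diff_right nn)
  ultimately have eq: "2 * (n \<bullet> a) / (a \<bullet> a) = 1" using a0 by (simp add: field_simps)
  have h: "hh n n = n - (2 * (n \<bullet> a) / (a \<bullet> a)) *\<^sub>R a" using False unfolding hh_def a_def by simp
  show ?thesis using h[unfolded eq] by (simp add: a_def)
qed

lemma hh_e1: "norm n = 1 \<Longrightarrow> hh n e1 = n"
  by (metis hh_invol hh_n)




lemma bilip_pos: "bi_lipschitz_on L V \<Phi> \<Longrightarrow> L > 0"
  by (simp add: bi_lipschitz_on_def)

lemma bilip_inj: "bi_lipschitz_on L V \<Phi> \<Longrightarrow> inj_on \<Phi> V"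
  unfolding inj_on_def bi_lipschitz_on_def
  by (metis dist_eq_0_iff mult_zero_right order_antisym zero_le_dist)

lemma bilip_cont: "bi_lipschitz_on L V \<Phi> \<Longrightarrow> continuous_on V \<Phi>"
  by (rule lipschitz_on_continuous_on[of L]) (auto simp: lipschitz_on_def bi_lipschitz_on_def)

lemma bilip_inv_lip:
  assumes "bi_lipschitz_on L V \<Phi>" "a \<in> \<Phi> ` V" "b \<in> \<Phi> ` V"
  shows "dist (inv_into V \<Phi> a) (inv_into V \<Phi> b) \<le> L * dist a b"
proof -
  have "dist (inv_into V \<Phi> a) (inv_into V \<Phi> b) \<le> L * dist (\<Phi> (inv_into V \<Phi> a)) (\<Phi> (inv_into V \<Phi> b))"
    using assms inv_into_into unfolding bi_lipschitz_on_def by metis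
  then show ?thesis using assms by (simp add: f_inv_into_f)
qed

lemma bilip_inv_cont:
  assumes "bi_lipschitz_on L V \<Phi>"
  shows "continuous_on (\<Phi> ` V) (inv_into V \<Phi>)"
proof (rule lipschitz_on_continuous_on[of L], unfold lipschitz_on_def, intro conjI ballI)
  show "0 \<le> L" using bilip_pos[OF assms] by simp
  fix a b assume "a \<in> \<Phi> ` V" "b \<in> \<Phi> ` V"
  then show "dist (inv_into V \<Phi> a) (inv_into V \<Phi> b) \<le> L * dist a b" by (rule bilip_inv_lip[OF assms])
qed

lemma piece_compact:
  assumes "bi_lipschitz_on L V \<Phi>" "compact S" "S \<subseteq> \<Phi> ` V" "P = {x\<in>V. \<Phi> x \<in> S}"
  shows "compact P"
proof -
  have inj: "inj_on \<Phi> V" using assms(1) by (rule bilip_inj)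
  have "P = inv_into V \<Phi> ` S"
  proof
    show "P \<subseteq> inv_into V \<Phi> ` S"
    proof
      fix x assume "x \<in> P"
      then have "x \<in> V" "\<Phi> x \<in> S" using assms(4) by auto
      then show "x \<in> inv_into V \<Phi> ` S" using inj by (metis image_eqI inv_into_f_f)
    qed
    show "inv_into V \<Phi> ` S \<subseteq> P"
      using assms(3,4) by (auto simp: inv_into_into f_inv_into_f)
  qed
  moreover have "continuous_on S (inv_into V \<Phi>)"
    using bilip_inv_cont[OF assms(1)] assms(3) continuous_on_subset by blast
  ultimately show ?thesis using compact_continuous_image assms(2) by blast
qed

lemma cone_facts:
  assumes "z \<in> cone_set \<epsilon>" "\<epsilon> > 0"
  shows "0 < z \<bullet> e1" "z \<bullet> e1 < \<epsilon>" "norm (z - (z \<bullet> e1) *\<^sub>R e1) < \<epsilon> * (z \<bullet> e1)"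
proof -
  have a: "norm (z - (z \<bullet> e1) *\<^sub>R e1) < \<epsilon> * (z \<bullet> e1)" "\<epsilon> * (z \<bullet> e1) < \<epsilon>\<^sup>2"
    using assms(1) by (auto simp: cone_set_def rest_coords_def first_coord_def)
  show "norm (z - (z \<bullet> e1) *\<^sub>R e1) < \<epsilon> * (z \<bullet> e1)" by (rule a(1))
  show "z \<bullet> e1 < \<epsilon>" using a(2) assms(2) by (simp add: power2_eq_square)
  have "0 < \<epsilon> * (z \<bullet> e1)" using a(1) by (meson le_less_trans norm_ge_zero)
  then show "0 < z \<bullet> e1" using assms(2) by (simp add: zero_less_mult_iff)
qed

lemma cone_mono:
  assumes "0 < \<epsilon>" "\<epsilon> \<le> \<epsilon>'"
  shows "cone_set \<epsilon> \<subseteq> cone_set \<epsilon>'"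
proof
  fix z assume z: "z \<in> cone_set \<epsilon>"
  note cf = cone_facts[OF z assms(1)]
  have "norm (z - (z \<bullet> e1) *\<^sub>R e1) < \<epsilon>' * (z \<bullet> e1)"
    using cf assms by (meson less_le_trans mult_right_mono less_imp_le)
  moreover have "\<epsilon>' * (z \<bullet> e1) < \<epsilon>'\<^sup>2"
    using cf assms by (simp add: power2_eq_square)
  ultimately show "z \<in> cone_set \<epsilon>'"
    by (simp add: cone_set_def rest_coords_def first_coord_def)
qed




lemma piece_cone:
  fixes \<Phi> :: "'a::euclidean_space \<Rightarrow> 'a"
  assumes opV: "open V" and bl: "bi_lipschitz_on L V \<Phi>" and cvx: "convex S" and cpt: "compact S"
    and d0: "\<delta> > 0" and cb: "cball c \<delta> \<subseteq> S" and SV: "S \<subseteq> \<Phi> ` V" and P: "P = {x\<in>V. \<Phi> x \<in> S}"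
  shows "\<exists>r0>0. \<exists>e0>0. \<forall>x0\<in>P. x0 \<notin> interior P \<longrightarrow> (\<forall>r \<epsilon>. 0 < r \<longrightarrow> r \<le> r0 \<longrightarrow> 0 < \<epsilon> \<longrightarrow> \<epsilon> \<le> e0 \<longrightarrow> \<epsilon> \<le> e0 * r \<longrightarrow>
      (\<exists>F::'a\<Rightarrow>'a. F x0 = 0 \<and>
        (\<forall>x\<in>ball x0 r. \<forall>y\<in>ball x0 r. \<epsilon> * dist x y \<le> dist (F x) (F y) \<and> dist (F x) (F y) \<le> dist x y / \<epsilon>) \<and>
        cone_set \<epsilon> \<subseteq> F ` (P \<inter> ball x0 r)))"
proof -
  have L0: "L > 0" using bl by (rule bilip_pos)
  have inj: "inj_on \<Phi> V" using bl by (rule bilip_inj)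
  have cP: "compact P" using piece_compact[OF bl cpt SV P] .
  have PV: "P \<subseteq> V" using P by auto
  obtain r0 where r0: "r0 > 0" "(\<Union>x\<in>P. ball x r0) \<subseteq> V"
    using compact_subset_open_imp_ball_epsilon_subset[OF cP opV PV] by blast
  obtain D0 where D0: "S \<subseteq> cball c D0"
    using bounded_subset_ballD[OF compact_imp_bounded[OF cpt], of c] ball_subset_cball by blast
  define D where "D = max D0 1"
  have D: "D > 0" "\<And>y. y \<in> S \<Longrightarrow> dist c y \<le> D" using D0 by (auto simp: D_def subset_eq)
  define e0 where "e0 = min (min 1 \<delta>) (min (\<delta> / D) (1 / (2 * L)))"
  have e0: "e0 > 0" "e0 \<le> 1" "e0 \<le> \<delta>" "e0 \<le> \<delta> / D" "e0 \<le> 1 / (2 * L)"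
    using d0 D L0 by (auto simp: e0_def)
  have H: "\<forall>x0\<in>P. x0 \<notin> interior P \<longrightarrow> (\<forall>r \<epsilon>. 0 < r \<longrightarrow> r \<le> r0 \<longrightarrow> 0 < \<epsilon> \<longrightarrow> \<epsilon> \<le> e0 \<longrightarrow> \<epsilon> \<le> e0 * r \<longrightarrow>
      (\<exists>F::'a\<Rightarrow>'a. F x0 = 0 \<and>
        (\<forall>x\<in>ball x0 r. \<forall>y\<in>ball x0 r. \<epsilon> * dist x y \<le> dist (F x) (F y) \<and> dist (F x) (F y) \<le> dist x y / \<epsilon>) \<and>
        cone_set \<epsilon> \<subseteq> F ` (P \<inter> ball x0 r)))"
  proof (intro ballI impI allI)
    fix x0 r \<epsilon>
    assume x0P: "x0 \<in> P" and nint: "x0 \<notin> interior P" and r: "0 < r" "r \<le> r0"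
      and eps: "0 < \<epsilon>" "\<epsilon> \<le> e0" "\<epsilon> \<le> e0 * r"
    define y0 where "y0 = \<Phi> x0"
    have x0V: "x0 \<in> V" and y0S: "y0 \<in> S" using x0P P y0_def by auto
    have ballV: "ball x0 r \<subseteq> V"
    proof
      fix x assume "x \<in> ball x0 r"
      then have "x \<in> ball x0 r0" using r by auto
      then show "x \<in> V" using r0(2) x0P by blast
    qed
    have far: "\<delta> \<le> dist c y0"
    proof (rule ccontr)
      assume "\<not> \<delta> \<le> dist c y0"
      then have y0b: "y0 \<in> ball c \<delta>" by simp
      define T where "T = \<Phi> -` ball c \<delta> \<inter> V"
      have "open T" using bilip_cont[OF bl] opV continuous_on_open_vimage T_def by blast
      moreover have "x0 \<in> T" using y0b x0V by (simp add: T_def y0_def)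
      moreover have "T \<subseteq> P" using cb P by (auto simp: T_def)
      ultimately have "x0 \<in> interior P" by (rule interiorI)
      then show False using nint by simp
    qed
    define u where "u = c - y0"
    define nu where "nu = norm u"
    have nu: "nu \<ge> \<delta>" "nu \<le> D" "nu > 0"
      using far D(2)[OF y0S] d0 by (auto simp: nu_def u_def dist_norm)
    define n where "n = (1 / nu) *\<^sub>R u"
    have nn: "norm n = 1" using nu by (simp add: n_def nu_def)
    have un: "u = nu *\<^sub>R n" using nu by (simp add: n_def)
    define F where "F = (\<lambda>x. hh n (\<Phi> x - y0))"
    have Fd: "dist (F x) (F y) = dist (\<Phi> x) (\<Phi> y)" for x y
      by (simp add: F_def dist_norm hh_diff[symmetric] hh_norm)
    have F0: "F x0 = 0" using hh_scale[of n 0 0] by (simp add: F_def y0_def)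
    have Le: "\<epsilon> * L \<le> 1/2"
    proof -
      have "\<epsilon> \<le> 1 / (2 * L)" using eps e0 by linarith
      then show ?thesis using L0 by (simp add: field_simps)
    qed
    have bil: "\<epsilon> * dist x y \<le> dist (F x) (F y) \<and> dist (F x) (F y) \<le> dist x y / \<epsilon>"
      if "x \<in> ball x0 r" "y \<in> ball x0 r" for x y
    proof -
      have xy: "x \<in> V" "y \<in> V" using that ballV by auto
      have h1: "dist x y \<le> L * dist (\<Phi> x) (\<Phi> y)" and h2: "dist (\<Phi> x) (\<Phi> y) \<le> L * dist x y"
        using bl xy by (auto simp: bi_lipschitz_on_def)
      have "\<epsilon> * dist x y \<le> \<epsilon> * L * dist (\<Phi> x) (\<Phi> y)" using h1 eps by (simp add: mult_left_mono mult.assoc)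
      also have "\<dots> \<le> dist (\<Phi> x) (\<Phi> y)"
      proof -
        have EL: "\<epsilon> * L \<le> 1" using Le by simp
        show ?thesis using mult_right_mono[OF EL zero_le_dist[of "\<Phi> x" "\<Phi> y"]] by simp
      qed
      finally have A: "\<epsilon> * dist x y \<le> dist (F x) (F y)" by (simp add: Fd)
      have "L * dist x y \<le> dist x y / \<epsilon>"
      proof -
        have "L \<le> 1 / \<epsilon>" using Le eps L0 by (simp add: field_simps)
        then show ?thesis by (simp add: mult_right_mono divide_inverse mult.commute)
      qed
      then have B: "dist (F x) (F y) \<le> dist x y / \<epsilon>" using h2 by (simp add: Fd)
      show ?thesis using A B by simp
    qed
    have cone: "cone_set \<epsilon> \<subseteq> F ` (P \<inter> ball x0 r)"
    proof
      fix z :: 'a assume z: "z \<in> cone_set \<epsilon>"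
      note cf = cone_facts[OF z eps(1)]
      define z1 where "z1 = z \<bullet> e1"
      define z' where "z' = z - z1 *\<^sub>R e1"
      have z1: "0 < z1" "z1 < \<epsilon>" "norm z' < \<epsilon> * z1" using cf by (auto simp: z1_def z'_def)
      define s where "s = z1 / nu"
      have s: "0 < s" "s \<le> 1"
        using z1 nu eps e0 by (auto simp: s_def)
      define w where "w = (1 / s) *\<^sub>R hh n z'"
      have hz: "hh n z = s *\<^sub>R u + hh n z'"
      proof -
        have "hh n z' = hh n z - z1 *\<^sub>R n"
          by (simp add: z'_def hh_diff hh_scale hh_e1[OF nn])
        moreover have "s *\<^sub>R u = z1 *\<^sub>R n" using nu by (simp add: un s_def)
        ultimately show ?thesis by simp
      qed
      define y where "y = y0 + hh n z"
      have yc: "y = (1 - s) *\<^sub>R y0 + s *\<^sub>R (c + w)"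
        using s by (simp add: y_def hz w_def u_def algebra_simps)
      have "norm w = norm z' / s" using s by (simp add: w_def hh_norm)
      also have "\<dots> \<le> \<epsilon> * z1 / s" using z1 s by (simp add: divide_right_mono)
      also have "\<dots> = \<epsilon> * nu" using z1 nu by (simp add: s_def)
      also have "\<dots> \<le> e0 * D" using eps nu e0 by (simp add: mult_mono)
      also have "\<dots> \<le> \<delta>" using e0 D by (simp add: le_divide_eq)
      finally have "c + w \<in> S" using cb by (auto simp: dist_norm)
      then have yS: "y \<in> S" using yc cvx y0S s unfolding convex_def by auto
      then have yV: "y \<in> \<Phi> ` V" using SV by auto
      define x where "x = inv_into V \<Phi> y"
      have xV: "x \<in> V" and Phx: "\<Phi> x = y" using yV by (auto simp: x_def inv_into_into f_inv_into_f)
      have xP: "x \<in> P" using xV Phx yS P by auto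
      have dxx: "dist x x0 \<le> L * dist y y0"
        using bilip_inv_lip[OF bl yV, of y0] x0V inj by (simp add: x_def y0_def)
      have dyy: "dist y y0 = norm z" by (simp add: y_def dist_norm hh_norm)
      have nz: "norm z < 2 * \<epsilon>"
      proof -
        have A: "norm z \<le> norm (z1 *\<^sub>R (e1::'a)) + norm z'"
          using norm_triangle_ineq[of "z1 *\<^sub>R e1" z'] by (simp add: z'_def)
        have B: "norm (z1 *\<^sub>R (e1::'a)) + norm z' < \<epsilon> + \<epsilon>"
        proof -
          have "norm (z1 *\<^sub>R (e1::'a)) = z1" using z1 by simp
          moreover have "\<epsilon> * z1 \<le> \<epsilon>" using z1 eps e0 by (simp add: mult_le_cancel_left1)
          ultimately show ?thesis using z1 by linarith
        qed
        show ?thesis using A B by simp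
      qed
      have "dist x x0 < L * (2 * \<epsilon>)" using L0 nz dxx dyy
        by (metis mult_strict_left_mono order_le_less_trans)
      also have "\<dots> \<le> r"
      proof -
        have "L * (2 * \<epsilon>) \<le> L * (2 * (e0 * r))" using eps L0 by simp
        also have "\<dots> = (2 * L * e0) * r" by simp
        also have "\<dots> \<le> 1 * r"
        proof -
          have "2 * L * e0 \<le> 1" using e0(5) L0 by (simp add: field_simps)
          then show ?thesis using r by (simp add: mult_right_mono)
        qed
        finally show ?thesis by simp
      qed
      finally have xb: "x \<in> ball x0 r" by (simp add: dist_commute)
      have "F x = z" by (simp add: F_def Phx y_def hh_invol)
      then show "z \<in> F ` (P \<inter> ball x0 r)" using xP xb by blast
    qed
    show "\<exists>F::'a\<Rightarrow>'a. F x0 = 0 \<and>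
        (\<forall>x\<in>ball x0 r. \<forall>y\<in>ball x0 r. \<epsilon> * dist x y \<le> dist (F x) (F y) \<and> dist (F x) (F y) \<le> dist x y / \<epsilon>) \<and>
        cone_set \<epsilon> \<subseteq> F ` (P \<inter> ball x0 r)"
      using F0 bil cone by blast
  qed
  show ?thesis
    by (rule exI[of _ r0], rule conjI[OF r0(1)], rule exI[of _ e0], rule conjI[OF e0(1)], rule H)
qed




definition piece :: "'a::euclidean_space set \<Rightarrow> bool" where
  "piece P \<longleftrightarrow> (\<exists>V (\<Phi>::'a\<Rightarrow>'a) L S c \<delta>. open V \<and> bi_lipschitz_on L V \<Phi> \<and> convex S \<and> compact S \<and>
      \<delta> > 0 \<and> cball c \<delta> \<subseteq> S \<and> S \<subseteq> \<Phi> ` V \<and> P = {x\<in>V. \<Phi> x \<in> S})"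

lemma piece_compact': "piece P \<Longrightarrow> compact P"
  unfolding piece_def by (elim exE conjE) (rule piece_compact, assumption+)

lemma piece_cone':
  fixes P :: "'a::euclidean_space set"
  assumes "piece P"
  shows "\<exists>r0>0. \<exists>e0>0. \<forall>x0\<in>P. x0 \<notin> interior P \<longrightarrow> (\<forall>r \<epsilon>. 0 < r \<longrightarrow> r \<le> r0 \<longrightarrow> 0 < \<epsilon> \<longrightarrow> \<epsilon> \<le> e0 \<longrightarrow> \<epsilon> \<le> e0 * r \<longrightarrow>
      (\<exists>F::'a\<Rightarrow>'a. F x0 = 0 \<and>
        (\<forall>x\<in>ball x0 r. \<forall>y\<in>ball x0 r. \<epsilon> * dist x y \<le> dist (F x) (F y) \<and> dist (F x) (F y) \<le> dist x y / \<epsilon>) \<and>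
        cone_set \<epsilon> \<subseteq> F ` (P \<inter> ball x0 r)))"
proof -
  obtain V \<Phi> L S c \<delta> where h: "open V" "bi_lipschitz_on L V (\<Phi>::'a\<Rightarrow>'a)" "convex S" "compact S"
      "\<delta> > 0" "cball c \<delta> \<subseteq> S" "S \<subseteq> \<Phi> ` V" "P = {x\<in>V. \<Phi> x \<in> S}"
    using assms unfolding piece_def by blast
  show ?thesis by (rule piece_cone[OF h])
qed

lemma union_cone:
  fixes \<P> :: "'a::euclidean_space set set"
  assumes fin: "finite \<P>" and pc: "\<And>P. P \<in> \<P> \<Longrightarrow> piece P"
  shows "bilip_cone_condition (\<Union>\<P>)"
proof -
  have "\<forall>P\<in>\<P>. \<exists>r0e0. fst r0e0 > 0 \<and> snd r0e0 > 0 \<and> (\<forall>x0\<in>P. x0 \<notin> interior P \<longrightarrow> (\<forall>r \<epsilon>. 0 < r \<longrightarrow> r \<le> fst r0e0 \<longrightarrow> 0 < \<epsilon> \<longrightarrow> \<epsilon> \<le> snd r0e0 \<longrightarrow> \<epsilon> \<le> snd r0e0 * r \<longrightarrow>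
      (\<exists>F::'a\<Rightarrow>'a. F x0 = 0 \<and>
        (\<forall>x\<in>ball x0 r. \<forall>y\<in>ball x0 r. \<epsilon> * dist x y \<le> dist (F x) (F y) \<and> dist (F x) (F y) \<le> dist x y / \<epsilon>) \<and>
        cone_set \<epsilon> \<subseteq> F ` (P \<inter> ball x0 r))))"
  proof
    fix P assume "P \<in> \<P>"
    from piece_cone'[OF pc[OF this]] obtain r0 e0 where "r0 > 0" "e0 > 0" and
      "\<forall>x0\<in>P. x0 \<notin> interior P \<longrightarrow> (\<forall>r \<epsilon>. 0 < r \<longrightarrow> r \<le> r0 \<longrightarrow> 0 < \<epsilon> \<longrightarrow> \<epsilon> \<le> e0 \<longrightarrow> \<epsilon> \<le> e0 * r \<longrightarrow>
      (\<exists>F::'a\<Rightarrow>'a. F x0 = 0 \<and>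
        (\<forall>x\<in>ball x0 r. \<forall>y\<in>ball x0 r. \<epsilon> * dist x y \<le> dist (F x) (F y) \<and> dist (F x) (F y) \<le> dist x y / \<epsilon>) \<and>
        cone_set \<epsilon> \<subseteq> F ` (P \<inter> ball x0 r)))" by blast
    then show "\<exists>r0e0. fst r0e0 > 0 \<and> snd r0e0 > 0 \<and> (\<forall>x0\<in>P. x0 \<notin> interior P \<longrightarrow> (\<forall>r \<epsilon>. 0 < r \<longrightarrow> r \<le> fst r0e0 \<longrightarrow> 0 < \<epsilon> \<longrightarrow> \<epsilon> \<le> snd r0e0 \<longrightarrow> \<epsilon> \<le> snd r0e0 * r \<longrightarrow>
      (\<exists>F::'a\<Rightarrow>'a. F x0 = 0 \<and>
        (\<forall>x\<in>ball x0 r. \<forall>y\<in>ball x0 r. \<epsilon> * dist x y \<le> dist (F x) (F y) \<and> dist (F x) (F y) \<le> dist x y / \<epsilon>) \<and>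
        cone_set \<epsilon> \<subseteq> F ` (P \<inter> ball x0 r))))"
      by (intro exI[of _ "(r0, e0)"]) simp
  qed
  then obtain RE where RE: "\<And>P. P \<in> \<P> \<Longrightarrow> fst (RE P) > 0 \<and> snd (RE P) > 0 \<and> (\<forall>x0\<in>P. x0 \<notin> interior P \<longrightarrow> (\<forall>r \<epsilon>. 0 < r \<longrightarrow> r \<le> fst (RE P) \<longrightarrow> 0 < \<epsilon> \<longrightarrow> \<epsilon> \<le> snd (RE P) \<longrightarrow> \<epsilon> \<le> snd (RE P) * r \<longrightarrow>
      (\<exists>F::'a\<Rightarrow>'a. F x0 = 0 \<and>
        (\<forall>x\<in>ball x0 r. \<forall>y\<in>ball x0 r. \<epsilon> * dist x y \<le> dist (F x) (F y) \<and> dist (F x) (F y) \<le> dist x y / \<epsilon>) \<and>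
        cone_set \<epsilon> \<subseteq> F ` (P \<inter> ball x0 r))))"
    by metis
  define r where "r = Min (insert 1 ((\<lambda>P. fst (RE P)) ` \<P>))"
  define m where "m = Min (insert 1 ((\<lambda>P. snd (RE P)) ` \<P>))"
  have fr: "finite (insert 1 ((\<lambda>P. fst (RE P)) ` \<P>))" "finite (insert 1 ((\<lambda>P. snd (RE P)) ` \<P>))"
    using fin by auto
  have r: "r > 0" "r \<le> 1" "\<And>P. P \<in> \<P> \<Longrightarrow> r \<le> fst (RE P)"
  proof -
    show "r > 0" unfolding r_def by (subst Min_gr_iff[OF fr(1)]) (use RE in auto)
    show "r \<le> 1" unfolding r_def by (rule Min_le[OF fr(1)]) simp
    show "r \<le> fst (RE P)" if "P \<in> \<P>" for P unfolding r_def by (rule Min_le[OF fr(1)]) (use that in simp)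
  qed
  have m: "m > 0" "m \<le> 1" "\<And>P. P \<in> \<P> \<Longrightarrow> m \<le> snd (RE P)"
  proof -
    show "m > 0" unfolding m_def by (subst Min_gr_iff[OF fr(2)]) (use RE in auto)
    show "m \<le> 1" unfolding m_def by (rule Min_le[OF fr(2)]) simp
    show "m \<le> snd (RE P)" if "P \<in> \<P>" for P unfolding m_def by (rule Min_le[OF fr(2)]) (use that in simp)
  qed
  define \<epsilon> where "\<epsilon> = m * r"
  have e: "\<epsilon> > 0" using r m by (simp add: \<epsilon>_def)
  have cl: "closed (\<Union>\<P>)" by (intro compact_imp_closed compact_Union fin piece_compact' pc)
  have H: "\<forall>x0\<in>frontier (\<Union>\<P>). \<exists>F::'a\<Rightarrow>'a. F x0 = 0 \<and>
      (\<forall>x\<in>ball x0 r. \<forall>y\<in>ball x0 r. \<epsilon> * dist x y \<le> dist (F x) (F y) \<and> dist (F x) (F y) \<le> dist x y / \<epsilon>) \<and>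
      cone_set \<epsilon> \<subseteq> F ` (\<Union>\<P> \<inter> ball x0 r)"
  proof
    fix x0 assume x0: "x0 \<in> frontier (\<Union>\<P>)"
    then have "x0 \<in> \<Union>\<P>" using cl frontier_subset_closed by blast
    then obtain P where P: "P \<in> \<P>" "x0 \<in> P" by blast
    have "x0 \<notin> interior (\<Union>\<P>)" using x0 by (simp add: frontier_def)
    moreover have "interior P \<subseteq> interior (\<Union>\<P>)" using P by (intro interior_mono) blast
    ultimately have ni: "x0 \<notin> interior P" by blast
    have e1': "\<epsilon> \<le> snd (RE P)"
    proof -
      have "m * r \<le> m * 1" using r m by (simp add: mult_left_mono)
      then show ?thesis using m(3)[OF P(1)] by (simp add: \<epsilon>_def)
    qed
    have e2': "\<epsilon> \<le> snd (RE P) * r" using m(3)[OF P(1)] r by (simp add: \<epsilon>_def mult_right_mono)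
    obtain F :: "'a\<Rightarrow>'a" where F: "F x0 = 0"
        "\<forall>x\<in>ball x0 r. \<forall>y\<in>ball x0 r. \<epsilon> * dist x y \<le> dist (F x) (F y) \<and> dist (F x) (F y) \<le> dist x y / \<epsilon>"
        "cone_set \<epsilon> \<subseteq> F ` (P \<inter> ball x0 r)"
      using RE[OF P(1)] P(2) ni r(1) r(3)[OF P(1)] e e1' e2' by blast
    have "F ` (P \<inter> ball x0 r) \<subseteq> F ` (\<Union>\<P> \<inter> ball x0 r)" using P by blast
    with F(3) have c3: "cone_set \<epsilon> \<subseteq> F ` (\<Union>\<P> \<inter> ball x0 r)" by (rule subset_trans)
    show "\<exists>F::'a\<Rightarrow>'a. F x0 = 0 \<and>
      (\<forall>x\<in>ball x0 r. \<forall>y\<in>ball x0 r. \<epsilon> * dist x y \<le> dist (F x) (F y) \<and> dist (F x) (F y) \<le> dist x y / \<epsilon>) \<and>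
      cone_set \<epsilon> \<subseteq> F ` (\<Union>\<P> \<inter> ball x0 r)"
      using F(1) F(2) c3 by (intro exI[of _ F] conjI)
  qed
  show ?thesis unfolding bilip_cone_condition_def
    by (rule exI[of _ r], rule conjI[OF r(1)], rule exI[of _ \<epsilon>], rule conjI[OF e], rule H)
qed




lemma cover:
  fixes \<Omega> :: "'a::euclidean_space set"
  assumes dom: "bilip_domain \<Omega>" and U': "open U'" and pcl: "p \<in> closure \<Omega>" and pU: "p \<in> U'"
  shows "\<exists>P W. piece P \<and> open W \<and> p \<in> W \<and> W \<inter> closure \<Omega> \<subseteq> P \<and> P \<subseteq> closure \<Omega> \<inter> U'"
proof (cases "p \<in> \<Omega>")
  case True
  have "open (\<Omega> \<inter> U')" using dom U' by (simp add: bilip_domain_def open_Int)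
  then obtain \<rho> where \<rho>: "\<rho> > 0" "cball p \<rho> \<subseteq> \<Omega> \<inter> U'"
    using True pU open_contains_cball by blast
  have bl: "bi_lipschitz_on 1 UNIV (id::'a\<Rightarrow>'a)" by (simp add: bi_lipschitz_on_def)
  have pc: "piece (cball p \<rho>)" unfolding piece_def
    by (rule exI[of _ UNIV], rule exI[of _ id], rule exI[of _ 1], rule exI[of _ "cball p \<rho>"],
        rule exI[of _ p], rule exI[of _ \<rho>]) (use \<rho> bl in auto)
  show ?thesis
    by (rule exI[of _ "cball p \<rho>"], rule exI[of _ "ball p \<rho>"]) (use pc \<rho> closure_subset in auto)
next
  case False
  have opO: "open \<Omega>" using dom by (simp add: bilip_domain_def)
  have "p \<in> frontier \<Omega>" using pcl False opO by (simp add: frontier_def interior_open)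
  then obtain V \<Phi> L where V: "open V" "p \<in> V" and bl: "bi_lipschitz_on L V (\<Phi>::'a\<Rightarrow>'a)"
      and opPV: "open (\<Phi> ` V)" and hs: "\<Phi> ` (V \<inter> \<Omega>) = \<Phi> ` V \<inter> half_space"
    using dom unfolding bilip_domain_def by blast
  have L0: "L > 0" using bl by (rule bilip_pos)
  have inj: "inj_on \<Phi> V" using bl by (rule bilip_inj)
  have cPhi: "continuous_on V \<Phi>" using bl by (rule bilip_cont)
  define g where "g = inv_into V \<Phi>"
  have cg: "continuous_on (\<Phi> ` V) g" unfolding g_def using bl by (rule bilip_inv_cont)
  have gPhi: "\<And>x. x \<in> V \<Longrightarrow> g (\<Phi> x) = x" using inj by (simp add: g_def)
  have Phig: "\<And>y. y \<in> \<Phi> ` V \<Longrightarrow> \<Phi> (g y) = y \<and> g y \<in> V"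
    by (simp add: g_def f_inv_into_f inv_into_into)
  have glip: "\<And>a b. a \<in> \<Phi> ` V \<Longrightarrow> b \<in> \<Phi> ` V \<Longrightarrow> dist (g a) (g b) \<le> L * dist a b"
    unfolding g_def using bl by (rule bilip_inv_lip)
  have memO: "x \<in> \<Omega>" if "x \<in> V" "\<Phi> x \<bullet> e1 > 0" for x
  proof -
    have "\<Phi> x \<in> \<Phi> ` V \<inter> half_space" using that by (simp add: half_space_def first_coord_def)
    then obtain x' where "x' \<in> V \<inter> \<Omega>" "\<Phi> x' = \<Phi> x" using hs by (metis imageE)
    then show ?thesis using inj that(1) by (metis IntD1 IntD2 inj_onD)
  qed
  have posc: "\<Phi> x \<bullet> e1 \<ge> 0" if "x \<in> V" "x \<in> closure \<Omega>" for x
  proof (rule ccontr)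
    assume "\<not> \<Phi> x \<bullet> e1 \<ge> 0"
    define T where "T = \<Phi> -` {y. e1 \<bullet> y < 0} \<inter> V"
    have "open T" using cPhi V(1) continuous_on_open_vimage open_halfspace_lt T_def by blast
    moreover have "x \<in> T" using that \<open>\<not> \<Phi> x \<bullet> e1 \<ge> 0\<close> by (simp add: T_def inner_commute)
    ultimately have "T \<inter> \<Omega> \<noteq> {}" using that(2) open_Int_closure_eq_empty by blast
    then obtain x' where x': "x' \<in> T" "x' \<in> \<Omega>" by blast
    then have "\<Phi> x' \<in> \<Phi> ` V \<inter> half_space" using hs T_def by blast
    then show False using x' by (simp add: T_def half_space_def first_coord_def inner_commute)
  qed
  define q where "q = \<Phi> p"
  have q0: "q \<bullet> e1 = 0"
    using posc[OF V(2) pcl] memO[OF V(2)] False by (force simp: q_def)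
  define G where "G = g -` U' \<inter> \<Phi> ` V"
  have opG: "open G" using cg opPV U' continuous_on_open_vimage G_def by blast
  have qG: "q \<in> G" using gPhi[OF V(2)] pU V(2) by (simp add: G_def q_def)
  obtain \<rho>0 where \<rho>0: "\<rho>0 > 0" "ball q \<rho>0 \<subseteq> G" using opG qG open_contains_ball by blast
  define \<rho> where "\<rho> = \<rho>0 / 2"
  have \<rho>: "\<rho> > 0" "ball q (2 * \<rho>) \<subseteq> G" using \<rho>0 by (auto simp: \<rho>_def)
  have GPV: "G \<subseteq> \<Phi> ` V" by (simp add: G_def)
  define S where "S = cball q \<rho> \<inter> {y. e1 \<bullet> y \<ge> 0}"
  define c where "c = q + (\<rho> / 2) *\<^sub>R e1"
  define P where "P = {x\<in>V. \<Phi> x \<in> S}"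
  have cvx: "convex S" unfolding S_def by (intro convex_Int convex_cball convex_halfspace_ge)
  have cpt: "compact S" unfolding S_def by (intro compact_Int_closed compact_cball closed_halfspace_ge)
  have cb: "cball c (\<rho>/4) \<subseteq> S"
  proof
    fix y assume y: "y \<in> cball c (\<rho>/4)"
    have "dist q y \<le> dist q c + dist c y" by (rule dist_triangle)
    also have "dist q c = \<rho> / 2" using \<rho> by (simp add: c_def dist_norm)
    finally have "dist q y \<le> \<rho>" using y \<rho> by simp
    moreover have "e1 \<bullet> y \<ge> 0"
    proof -
      have "e1 \<bullet> y = e1 \<bullet> q + \<rho> / 2 + e1 \<bullet> (y - c)"
        by (simp add: c_def inner_diff_right inner_add_right)
      moreover have "\<bar>e1 \<bullet> (y - c)\<bar> \<le> norm (y - c)" by (metis Basis_le_norm e1_Basis inner_commute)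
      moreover have "e1 \<bullet> q = 0" using q0 by (simp add: inner_commute)
      moreover have "norm (y - c) \<le> \<rho> / 4" using y by (simp add: dist_norm norm_minus_commute)
      ultimately show ?thesis using \<rho> by linarith
    qed
    ultimately show "y \<in> S" by (simp add: S_def)
  qed
  have SV: "S \<subseteq> \<Phi> ` V"
  proof
    fix y assume "y \<in> S"
    then have "y \<in> ball q (2 * \<rho>)" using \<rho> by (simp add: S_def)
    then show "y \<in> \<Phi> ` V" using \<rho>(2) GPV by blast
  qed
  have pc: "piece P" unfolding piece_def
    by (rule exI[of _ V], rule exI[of _ \<Phi>], rule exI[of _ L], rule exI[of _ S],
        rule exI[of _ c], rule exI[of _ "\<rho>/4"]) (use V bl cvx cpt \<rho> cb SV P_def in auto)
  define W where "W = \<Phi> -` ball q \<rho> \<inter> V"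
  have opW: "open W" using cPhi V(1) continuous_on_open_vimage W_def by blast
  have pW: "p \<in> W" using V(2) \<rho> by (simp add: W_def q_def)
  have WP: "W \<inter> closure \<Omega> \<subseteq> P"
    using posc by (auto simp: W_def P_def S_def inner_commute)
  have PU: "P \<subseteq> U'"
  proof
    fix x assume "x \<in> P"
    then have "x \<in> V" "\<Phi> x \<in> G" using \<rho> by (auto simp: P_def S_def)
    then show "x \<in> U'" using gPhi by (auto simp: G_def)
  qed
  have Pcl: "P \<subseteq> closure \<Omega>"
  proof
    fix x assume xP: "x \<in> P"
    then have xV: "x \<in> V" and xS: "\<Phi> x \<in> S" by (auto simp: P_def)
    show "x \<in> closure \<Omega>"
    proof (cases "\<Phi> x \<bullet> e1 > 0")
      case True then show ?thesis using memO xV closure_subset by blast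
    next
      case False
      then have x0: "\<Phi> x \<bullet> e1 = 0" using xS by (simp add: S_def inner_commute)
      show ?thesis unfolding closure_approachable
      proof (intro allI impI)
        fix e :: real assume e: "e > 0"
        define t where "t = min (\<rho> / 2) (e / (2 * L))"
        have t: "t > 0" "t \<le> \<rho> / 2" "t \<le> e / (2 * L)" using e \<rho> L0 by (auto simp: t_def)
        define y' where "y' = \<Phi> x + t *\<^sub>R e1"
        have "dist q y' \<le> dist q (\<Phi> x) + dist (\<Phi> x) y'" by (rule dist_triangle)
        also have "dist (\<Phi> x) y' = t" using t by (simp add: y'_def dist_norm)
        finally have "dist q y' < 2 * \<rho>" using xS t \<rho> by (simp add: S_def)
        then have y'PV: "y' \<in> \<Phi> ` V" using \<rho> GPV by auto
        have "g y' \<in> \<Omega>"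
        proof (rule memO)
          show "g y' \<in> V" using Phig[OF y'PV] by simp
          show "\<Phi> (g y') \<bullet> e1 > 0" using Phig[OF y'PV] x0 t by (simp add: y'_def inner_add_left)
        qed
        moreover have "dist (g y') x < e"
        proof -
          have "dist (g y') (g (\<Phi> x)) \<le> L * dist y' (\<Phi> x)"
            using glip[OF y'PV] xV by simp
          also have "dist y' (\<Phi> x) = t" using t by (simp add: y'_def dist_norm)
          finally have "dist (g y') x \<le> L * t" using gPhi[OF xV] by simp
          also have "L * t \<le> L * (e / (2 * L))" by (rule mult_left_mono[OF t(3)]) (use L0 in simp)
          also have "\<dots> = e / 2" using L0 by simp
          finally show ?thesis using e by simp
        qed
        ultimately show "\<exists>y\<in>\<Omega>. dist y x < e" by blast
      qed
    qed
  qed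
  show ?thesis using pc opW pW WP PU Pcl by blast
qed

theorem lemma6p2:
  fixes \<Omega> K U :: "'a::euclidean_space set"
  assumes "bilip_domain \<Omega>"
    and "compact K" and "K \<subseteq> closure \<Omega>"
    and "openin (top_of_set (closure \<Omega>)) U" and "K \<subseteq> U"
  shows "\<exists>K'. compact K' \<and> K \<subseteq> K' \<and> K' \<subseteq> U \<and> bilip_cone_condition K'"
proof -
  obtain U' where U': "open U'" "U = closure \<Omega> \<inter> U'" using assms(4) openin_open by blast
  have "\<forall>p\<in>K. \<exists>PW. piece (fst PW) \<and> open (snd PW) \<and> p \<in> snd PW \<and> snd PW \<inter> closure \<Omega> \<subseteq> fst PW \<and> fst PW \<subseteq> closure \<Omega> \<inter> U'"
  proof
    fix p assume "p \<in> K"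
    then obtain P W where "piece P \<and> open W \<and> p \<in> W \<and> W \<inter> closure \<Omega> \<subseteq> P \<and> P \<subseteq> closure \<Omega> \<inter> U'"
      using cover[OF assms(1) U'(1)] assms(3,5) U'(2) by blast
    then show "\<exists>PW. piece (fst PW) \<and> open (snd PW) \<and> p \<in> snd PW \<and> snd PW \<inter> closure \<Omega> \<subseteq> fst PW \<and> fst PW \<subseteq> closure \<Omega> \<inter> U'"
      by (intro exI[of _ "(P, W)"]) simp
  qed
  then obtain PW where PW: "\<And>p. p \<in> K \<Longrightarrow> piece (fst (PW p)) \<and> open (snd (PW p)) \<and> p \<in> snd (PW p) \<and>
      snd (PW p) \<inter> closure \<Omega> \<subseteq> fst (PW p) \<and> fst (PW p) \<subseteq> closure \<Omega> \<inter> U'"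
    by metis
  obtain K0 where K0: "K0 \<subseteq> K" "finite K0" "K \<subseteq> (\<Union>p\<in>K0. snd (PW p))"
    using compactE_image[OF assms(2), of K "\<lambda>p. snd (PW p)"] PW by blast
  define K' where "K' = \<Union>((\<lambda>p. fst (PW p)) ` K0)"
  have pcs: "\<And>P. P \<in> (\<lambda>p. fst (PW p)) ` K0 \<Longrightarrow> piece P" using PW K0(1) by blast
  have "compact K'" unfolding K'_def using K0(2) pcs piece_compact' by blast
  moreover have "K \<subseteq> K'"
  proof
    fix x assume "x \<in> K"
    then obtain p where "p \<in> K0" "x \<in> snd (PW p)" using K0(3) by blast
    then show "x \<in> K'" using PW K0(1) \<open>x \<in> K\<close> assms(3) unfolding K'_def by blast
  qed
  moreover have "K' \<subseteq> U" using PW K0(1) U'(2) unfolding K'_def by blast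
  moreover have "bilip_cone_condition K'"
    unfolding K'_def by (rule union_cone) (use K0(2) pcs in auto)
  ultimately show ?thesis by blast
qed


end
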